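(* Let $q\in\mathcal{K}\setminus\{0\}$, let $(\mathcal{A},\succ,\prec)$ be a $q$-generalized dendriform algebra with associated $q$-generalized associative algebra $(\mathcal{A},\ast)$, and let $(l_\succ,r_\succ,l_\prec,r_\prec,V)$ be a bimodule of $(\mathcal{A},\succ,\prec)$. Define $l^*_\succ,r^*_\succ,l^*_\prec,r^*_\prec:\mathcal{A}\to gl(V^* )$ by $\langle f^*(x)a^*,y\rangle=\langle f(x)y,a^*\rangle$ for $f\in\{l_\succ,r_\succ,l_\prec,r_\prec\}$. Then: (1) $(q^{-2}(r^*_\succ+r^*_\prec),\,-q^{2}l^*_\prec,\,-q^{-2}r^*_\succ,\,q^{2}(l^*_\succ+l^*_\prec),\,V^* )$ is a bimodule of $(\mathcal{A},\succ,\prec)$; (2) $(q^{-2}(r^*_\succ+r^*_\prec),0,0,q^2(l^*_\succ+l^*_\prec),V^* )$ and $(q^{-2}r^*_\prec,0,0,q^2l^*_\succ,V^* )$ are bimodules of $(\mathcal{A},\succ,\prec)$; (3) $(q^{-2}(r^*_\succ+r^*_\prec),q^2(l^*_\succ+l^*_\prec),V^* )$ and $(q^{-2}r^*_\prec,q^2l^*_\succ,V^* )$ are bimodules of $(\mathcal{A},\ast)$; (4) the $q$-generalized dendriform algebras $\mathcal{A}\ltimes_{q^{-2}(r^*_\succ+r^*_\prec),-q^2l^*_\prec,-q^{-2}r^*_\succ,q^2(l^*_\succ+l^*_\prec)}V^*$ and $\mathcal{A}\ltimes_{q^{-2}r^*_\prec,0,0,q^2l^*_\succ}V^*$ have the same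 associated $q$-generalized associative algebra $\mathcal{A}\ltimes_{q^{-2}r^*_\prec,q^2l^*_\succ}V^*$.
   Context: A $q$-generalized dendriform algebra is a vector space $\mathcal{A}$ with bilinear products $\prec,\succ$ such that, with $x\ast y=x\prec y+x\succ y$: $(x\prec y)\prec z=q\,x\prec(y\ast z)$, $(x\succ y)\prec z=q\,x\succ(y\prec z)$, $x\succ(y\succ z)=q^{-1}(x\ast y)\succ z$; $(\mathcal{A},\ast)$ is then a $q$-generalized associative algebra ($(x\ast y)\ast z=q\,x\ast(y\ast z)$). A bimodule $(l,r,V)$ of $(\mathcal{A},\ast)$: $l,r:\mathcal{A}\to gl(V)$ linear with $l(x\ast y)=q\,l(x)l(y)$, $r(x\ast y)=q^{-1}r(y)r(x)$, $l(x)r(y)=q^{-1}r(y)l(x)$; $\mathcal{A}\ltimes_{l,r}V$ is $\mathcal{A}\oplus V$ with $(x+u)\ast(y+v)=x\ast y+l(x)v+r(y)u$. A bimodule of $(\mathcal{A},\succ,\prec)$ is a tuple $(l_\succ,r_\succ,l_\prec,r_\prec,V)$ of linear maps $\mathcal{A}\to gl(V)$ such that, with $l_\ast=l_\succ+l_\prec$, $r_\ast=r_\succ+r_\prec$: $l_\prec(x\prec y)=q\,l_\prec(x)l_\ast(y)$, $r_\prec(x)l_\prec(y)=q\,l_\prec(y)r_\ast(x)$, $r_\prec(x)r_\prec(y)=q\,r_\prec(y\ast x)$, $l_\prec(x\succ y)=q\,l_\succ(x)l_\prec(y)$, $r_\prec(x)l_\succ(y)=q\,l_\succ(y)r_\prec(x)$,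 $r_\prec(x)r_\succ(y)=q\,r_\succ(y\prec x)$, $l_\succ(x\ast y)=q\,l_\succ(x)l_\succ(y)$, $r_\succ(x)l_\ast(y)=q\,l_\succ(y)r_\succ(x)$, $r_\succ(x)r_\ast(y)=q\,r_\succ(y\succ x)$. $\mathcal{A}\ltimes_{l_\succ,r_\succ,l_\prec,r_\prec}V$ denotes $\mathcal{A}\oplus V$ with $(x+u)\succ(y+v)=x\succ y+l_\succ(x)v+r_\succ(y)u$, $(x+u)\prec(y+v)=x\prec y+l_\prec(x)v+r_\prec(y)u$. *)

theory Defs
  imports Main HOL.Vector_Spaces "HOL-Library.Function_Algebras" "HOL-Library.Product_Plus"
begin

text \<open>Ambient spaces are types carrying an addition (ab_group_add) and a scalar
multiplication by a field 'k; subspaces are given as carrier sets, so that the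
algebraic dual (linear functionals) can be treated as a carrier inside the
function space.\<close>

definition subspace_on :: "'w::ab_group_add set \<Rightarrow> ('k::field \<Rightarrow> 'w \<Rightarrow> 'w) \<Rightarrow> bool" where
  "subspace_on W s \<equiv> 0 \<in> W \<and> (\<forall>u\<in>W. \<forall>v\<in>W. u + v \<in> W) \<and> (\<forall>c. \<forall>u\<in>W. s c u \<in> W)"

definition lin_endo :: "'w::ab_group_add set \<Rightarrow> ('k::field \<Rightarrow> 'w \<Rightarrow> 'w) \<Rightarrow> ('w \<Rightarrow> 'w) \<Rightarrow> bool" where
  "lin_endo W s f \<equiv> (\<forall>u\<in>W. f u \<in> W) \<and> (\<forall>u\<in>W. \<forall>v\<in>W. f (u + v) = f u + f v)
     \<and> (\<forall>c. \<forall>u\<in>W. f (s c u) = s c (f u))"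

definition bilinear_on :: "'a::ab_group_add set \<Rightarrow> ('k::field \<Rightarrow> 'a \<Rightarrow> 'a) \<Rightarrow> ('a \<Rightarrow> 'a \<Rightarrow> 'a) \<Rightarrow> bool" where
  "bilinear_on S s m \<equiv> (\<forall>x\<in>S. \<forall>y\<in>S. m x y \<in> S)
     \<and> (\<forall>x\<in>S. \<forall>y\<in>S. \<forall>z\<in>S. m (x + y) z = m x z + m y z \<and> m z (x + y) = m z x + m z y)
     \<and> (\<forall>c. \<forall>x\<in>S. \<forall>y\<in>S. m (s c x) y = s c (m x y) \<and> m x (s c y) = s c (m x y))"

definition qassoc_alg :: "'k::field \<Rightarrow> 'a::ab_group_add set \<Rightarrow> ('k \<Rightarrow> 'a \<Rightarrow> 'a) \<Rightarrow> ('a \<Rightarrow> 'a \<Rightarrow> 'a) \<Rightarrow> bool" where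
  "qassoc_alg q S s m \<equiv> subspace_on S s \<and> bilinear_on S s m \<and>
     (\<forall>x\<in>S. \<forall>y\<in>S. \<forall>z\<in>S. m (m x y) z = s q (m x (m y z)))"

definition dast :: "('a::plus \<Rightarrow> 'a \<Rightarrow> 'a) \<Rightarrow> ('a \<Rightarrow> 'a \<Rightarrow> 'a) \<Rightarrow> 'a \<Rightarrow> 'a \<Rightarrow> 'a" where
  "dast succ prec x y = prec x y + succ x y"

definition qdend_alg :: "'k::field \<Rightarrow> 'a::ab_group_add set \<Rightarrow> ('k \<Rightarrow> 'a \<Rightarrow> 'a)
    \<Rightarrow> ('a \<Rightarrow> 'a \<Rightarrow> 'a) \<Rightarrow> ('a \<Rightarrow> 'a \<Rightarrow> 'a) \<Rightarrow> bool" where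
  "qdend_alg q S s succ prec \<equiv> subspace_on S s \<and> bilinear_on S s succ \<and> bilinear_on S s prec \<and>
     (\<forall>x\<in>S. \<forall>y\<in>S. \<forall>z\<in>S.
        prec (prec x y) z = s q (prec x (dast succ prec y z)) \<and>
        prec (succ x y) z = s q (succ x (prec y z)) \<and>
        succ x (succ y z) = s (inverse q) (succ (dast succ prec x y) z))"

definition rep_map :: "'a::ab_group_add set \<Rightarrow> ('k::field \<Rightarrow> 'a \<Rightarrow> 'a) \<Rightarrow> 'w::ab_group_add set
    \<Rightarrow> ('k \<Rightarrow> 'w \<Rightarrow> 'w) \<Rightarrow> ('a \<Rightarrow> 'w \<Rightarrow> 'w) \<Rightarrow> bool" where
  "rep_map S s W sW l \<equiv> (\<forall>x\<in>S. lin_endo W sW (l x)) \<and>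
     (\<forall>x\<in>S. \<forall>y\<in>S. \<forall>w\<in>W. l (x + y) w = l x w + l y w) \<and>
     (\<forall>c. \<forall>x\<in>S. \<forall>w\<in>W. l (s c x) w = sW c (l x w))"

definition qassoc_bimod :: "'k::field \<Rightarrow> 'a::ab_group_add set \<Rightarrow> ('k \<Rightarrow> 'a \<Rightarrow> 'a) \<Rightarrow> ('a \<Rightarrow> 'a \<Rightarrow> 'a)
    \<Rightarrow> 'w::ab_group_add set \<Rightarrow> ('k \<Rightarrow> 'w \<Rightarrow> 'w) \<Rightarrow> ('a \<Rightarrow> 'w \<Rightarrow> 'w) \<Rightarrow> ('a \<Rightarrow> 'w \<Rightarrow> 'w) \<Rightarrow> bool" where
  "qassoc_bimod q S s m W sW l r \<equiv> subspace_on W sW \<and> rep_map S s W sW l \<and> rep_map S s W sW r \<and>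
     (\<forall>x\<in>S. \<forall>y\<in>S. \<forall>w\<in>W.
        l (m x y) w = sW q (l x (l y w)) \<and>
        r (m x y) w = sW (inverse q) (r y (r x w)) \<and>
        l x (r y w) = sW (inverse q) (r y (l x w)))"

definition qdend_bimod :: "'k::field \<Rightarrow> 'a::ab_group_add set \<Rightarrow> ('k \<Rightarrow> 'a \<Rightarrow> 'a)
    \<Rightarrow> ('a \<Rightarrow> 'a \<Rightarrow> 'a) \<Rightarrow> ('a \<Rightarrow> 'a \<Rightarrow> 'a)
    \<Rightarrow> 'w::ab_group_add set \<Rightarrow> ('k \<Rightarrow> 'w \<Rightarrow> 'w)
    \<Rightarrow> ('a \<Rightarrow> 'w \<Rightarrow> 'w) \<Rightarrow> ('a \<Rightarrow> 'w \<Rightarrow> 'w) \<Rightarrow> ('a \<Rightarrow> 'w \<Rightarrow> 'w) \<Rightarrow> ('a \<Rightarrow> 'w \<Rightarrow> 'w) \<Rightarrow> bool" where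
  "qdend_bimod q S s succ prec W sW ls rs lp rp \<equiv>
     subspace_on W sW \<and> rep_map S s W sW ls \<and> rep_map S s W sW rs \<and>
     rep_map S s W sW lp \<and> rep_map S s W sW rp \<and>
     (let ast = dast succ prec; la = (\<lambda>x w. ls x w + lp x w); ra = (\<lambda>x w. rs x w + rp x w) in
     (\<forall>x\<in>S. \<forall>y\<in>S. \<forall>w\<in>W.
        lp (prec x y) w = sW q (lp x (la y w)) \<and>
        rp x (lp y w) = sW q (lp y (ra x w)) \<and>
        rp x (rp y w) = sW q (rp (ast y x) w) \<and>
        lp (succ x y) w = sW q (ls x (lp y w)) \<and>
        rp x (ls y w) = sW q (ls y (rp x w)) \<and>
        rp x (rs y w) = sW q (rs (prec y x) w) \<and>
        ls (ast x y) w = sW q (ls x (ls y w)) \<and>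
        rs x (la y w) = sW q (ls y (rs x w)) \<and>
        rs x (ra y w) = sW q (rs (succ y x) w)))"

definition is_vspace :: "('k::field \<Rightarrow> 'w::ab_group_add \<Rightarrow> 'w) \<Rightarrow> bool" where
  "is_vspace s \<equiv> vector_space s"

definition dual_space :: "('k::field \<Rightarrow> 'v::ab_group_add \<Rightarrow> 'v) \<Rightarrow> ('v \<Rightarrow> 'k) set" where
  "dual_space sV = {f. (\<forall>u v. f (u + v) = f u + f v) \<and> (\<forall>c u. f (sV c u) = c * f u)}"

definition dscale :: "'k::field \<Rightarrow> ('v \<Rightarrow> 'k) \<Rightarrow> ('v \<Rightarrow> 'k)" where
  "dscale c f = (\<lambda>v. c * f v)"

definition dual_rep :: "('a \<Rightarrow> 'v \<Rightarrow> 'v) \<Rightarrow> 'a \<Rightarrow> ('v \<Rightarrow> 'k) \<Rightarrow> ('v \<Rightarrow> 'k)" where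
  "dual_rep f x a = (\<lambda>y. a (f x y))"

definition pscale :: "('k \<Rightarrow> 'a \<Rightarrow> 'a) \<Rightarrow> ('k \<Rightarrow> 'w \<Rightarrow> 'w) \<Rightarrow> 'k \<Rightarrow> 'a \<times> 'w \<Rightarrow> 'a \<times> 'w" where
  "pscale s sW c p = (s c (fst p), sW c (snd p))"

definition sd_prod :: "('a \<Rightarrow> 'a \<Rightarrow> 'a) \<Rightarrow> ('a \<Rightarrow> 'w \<Rightarrow> 'w) \<Rightarrow> ('a \<Rightarrow> 'w \<Rightarrow> 'w)
    \<Rightarrow> 'a \<times> 'w \<Rightarrow> 'a \<times> 'w \<Rightarrow> 'a \<times> ('w::plus)" where
  "sd_prod m l r p p' = (m (fst p) (fst p'), l (fst p) (snd p') + r (fst p') (snd p))"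

end

theory Submission
  imports Defs
begin

lemma repD:
  assumes "rep_map UNIV s W sW f"
  shows "u\<in>W \<Longrightarrow> f x u \<in> W" "u\<in>W \<Longrightarrow> v\<in>W \<Longrightarrow> f x (u+v) = f x u + f x v"
    "u\<in>W \<Longrightarrow> f x (sW c u) = sW c (f x u)" "u\<in>W \<Longrightarrow> f (x+y) u = f x u + f y u"
    "u\<in>W \<Longrightarrow> f (s c x) u = sW c (f x u)"
  using assms unfolding rep_map_def lin_endo_def by auto

lemma sd_dend:
  fixes sW :: "'k::field \<Rightarrow> 'w::ab_group_add \<Rightarrow> 'w" and s :: "'k \<Rightarrow> 'a::ab_group_add \<Rightarrow> 'a"
  assumes D: "qdend_alg q UNIV s succ prec"
    and M: "qdend_bimod q UNIV s succ prec W sW ls rs lp rp"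
    and wadd: "\<And>c u v. u\<in>W \<Longrightarrow> v\<in>W \<Longrightarrow> sW c (u+v) = sW c u + sW c v"
    and winv: "\<And>u. u\<in>W \<Longrightarrow> sW (inverse q) (sW q u) = u"
  shows "qdend_alg q (UNIV \<times> W) (pscale s sW) (sd_prod succ ls rs) (sd_prod prec lp rp)"
proof -
  from D have bs: "bilinear_on UNIV s succ" and bp: "bilinear_on UNIV s prec"
    and ax: "\<And>x y z.
        prec (prec x y) z = s q (prec x (dast succ prec y z)) \<and>
        prec (succ x y) z = s q (succ x (prec y z)) \<and>
        succ x (succ y z) = s (inverse q) (succ (dast succ prec x y) z)"
    unfolding qdend_alg_def by auto
  from bs have sl: "\<And>x y z. succ (x + y) z = succ x z + succ y z"
    and sr: "\<And>x y z. succ z (x + y) = succ z x + succ z y"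
    and ss1: "\<And>c x y. succ (s c x) y = s c (succ x y)"
    and ss2: "\<And>c x y. succ x (s c y) = s c (succ x y)"
    unfolding bilinear_on_def by auto
  from bp have pl: "\<And>x y z. prec (x + y) z = prec x z + prec y z"
    and pr: "\<And>x y z. prec z (x + y) = prec z x + prec z y"
    and ps1: "\<And>c x y. prec (s c x) y = s c (prec x y)"
    and ps2: "\<And>c x y. prec x (s c y) = s c (prec x y)"
    unfolding bilinear_on_def by auto
  from M have subW: "subspace_on W sW" and rls: "rep_map UNIV s W sW ls" and rrs: "rep_map UNIV s W sW rs"
    and rlp: "rep_map UNIV s W sW lp" and rrp: "rep_map UNIV s W sW rp"
    and ids: "\<And>x y w. w \<in> W \<Longrightarrow>
        lp (prec x y) w = sW q (lp x (ls y w + lp y w)) \<and>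
        rp x (lp y w) = sW q (lp y (rs x w + rp x w)) \<and>
        rp x (rp y w) = sW q (rp (dast succ prec y x) w) \<and>
        lp (succ x y) w = sW q (ls x (lp y w)) \<and>
        rp x (ls y w) = sW q (ls y (rp x w)) \<and>
        rp x (rs y w) = sW q (rs (prec y x) w) \<and>
        ls (dast succ prec x y) w = sW q (ls x (ls y w)) \<and>
        rs x (ls y w + lp y w) = sW q (ls y (rs x w)) \<and>
        rs x (rs y w + rp y w) = sW q (rs (succ y x) w)"
    unfolding qdend_bimod_def Let_def by auto
  from subW have W0: "0 \<in> W" and Wadd: "\<And>u v. u\<in>W \<Longrightarrow> v\<in>W \<Longrightarrow> u+v\<in>W"
    and Wsc: "\<And>c u. u\<in>W \<Longrightarrow> sW c u\<in>W"
    unfolding subspace_on_def by auto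
  note lin = repD[OF rls] repD[OF rrs] repD[OF rlp] repD[OF rrp]
  have sub: "subspace_on (UNIV \<times> W) (pscale s sW)"
    unfolding subspace_on_def pscale_def using W0 Wadd Wsc by (auto simp: zero_prod_def)
  have bil: "bilinear_on (UNIV \<times> W) (pscale s sW) (sd_prod m l r)"
    if bm: "bilinear_on UNIV s m" and rl: "rep_map UNIV s W sW l" and rr: "rep_map UNIV s W sW r" for m l r
  proof -
    note Rl = repD[OF rl] and Rr = repD[OF rr]
    from bm have "\<And>x y z. m (x + y) z = m x z + m y z" "\<And>x y z. m z (x + y) = m z x + m z y"
      "\<And>c x y. m (s c x) y = s c (m x y)" "\<And>c x y. m x (s c y) = s c (m x y)"
      unfolding bilinear_on_def by auto
    note mm = this
    show ?thesis unfolding bilinear_on_def sd_prod_def pscale_def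
      apply (intro conjI ballI allI)
      subgoal using Rl Rr Wadd by (auto simp: mem_Times_iff)
      subgoal for p p' p'' using Rl Rr mm by (auto simp: mem_Times_iff add_ac)
      subgoal for c p p' using Rl Rr mm Wsc by (auto simp: mem_Times_iff wadd)
      subgoal for c p p' using Rl Rr mm Wsc by (auto simp: mem_Times_iff wadd)
      subgoal for c p p' using Rl Rr mm Wsc by (auto simp: mem_Times_iff wadd)
      done
  qed
  have ax2: "sd_prod prec lp rp (sd_prod prec lp rp p p') p'' = pscale s sW q (sd_prod prec lp rp p (dast (sd_prod succ ls rs) (sd_prod prec lp rp) p' p'')) \<and>
        sd_prod prec lp rp (sd_prod succ ls rs p p') p'' = pscale s sW q (sd_prod succ ls rs p (sd_prod prec lp rp p' p'')) \<and>
        sd_prod succ ls rs p (sd_prod succ ls rs p' p'') = pscale s sW (inverse q) (sd_prod succ ls rs (dast (sd_prod succ ls rs) (sd_prod prec lp rp) p p') p'')"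
    if "p \<in> UNIV \<times> W" "p' \<in> UNIV \<times> W" "p'' \<in> UNIV \<times> W" for p p' p''
  proof -
    obtain x u y v z w where P: "p = (x,u)" "p' = (y,v)" "p'' = (z,w)"
      by (metis prod.collapse)
    have W: "u\<in>W" "v\<in>W" "w\<in>W" using that P by auto
    have i: "lp (prec x y) w = sW q (lp x (ls y w + lp y w))"
        "rp z (lp x v) = sW q (lp x (rs z v + rp z v))"
        "rp z (rp y u) = sW q (rp (dast succ prec y z) u)"
        "lp (succ x y) w = sW q (ls x (lp y w))"
        "rp z (ls x v) = sW q (ls x (rp z v))"
        "rp z (rs y u) = sW q (rs (prec y z) u)"
        "ls (dast succ prec x y) w = sW q (ls x (ls y w))"
        "rs z (ls x v + lp x v) = sW q (ls x (rs z v))"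
        "rs z (rs y u + rp y u) = sW q (rs (succ y z) u)"
      using ids W by blast+
    note WW = W lin Wadd Wsc
    have s1: "lp (prec x y) w + rp z (lp x v + rp y u) = sW q (lp x (lp y w + rp z v + (ls y w + rs z v)) + rp (prec y z + succ y z) u)"
    proof -
      have "sW q (lp x (lp y w + rp z v + (ls y w + rs z v)) + rp (prec y z + succ y z) u)
          = sW q (lp x (ls y w + lp y w)) + sW q (lp x (rs z v + rp z v)) + sW q (rp (dast succ prec y z) u)"
        by (simp add: WW wadd dast_def add_ac)
      also have "\<dots> = lp (prec x y) w + rp z (lp x v) + rp z (rp y u)" by (simp only: i)
      finally show ?thesis by (simp add: WW add_ac)
    qed
    have s2: "lp (succ x y) w + rp z (ls x v + rs y u) = sW q (ls x (lp y w + rp z v) + rs (prec y z) u)"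
    proof -
      have "sW q (ls x (lp y w + rp z v) + rs (prec y z) u)
          = sW q (ls x (lp y w)) + sW q (ls x (rp z v)) + sW q (rs (prec y z) u)"
        by (simp add: WW wadd add_ac)
      also have "\<dots> = lp (succ x y) w + rp z (ls x v) + rp z (rs y u)" by (simp only: i)
      finally show ?thesis by (simp add: WW add_ac)
    qed
    have s3: "ls x (ls y w + rs z v) + rs (succ y z) u = sW (inverse q) (ls (prec x y + succ x y) w + rs z (lp x v + rp y u + (ls x v + rs y u)))"
    proof -
      have "ls (prec x y + succ x y) w + rs z (lp x v + rp y u + (ls x v + rs y u))
          = ls (dast succ prec x y) w + rs z (ls x v + lp x v) + rs z (rs y u + rp y u)"
        by (simp add: WW dast_def add_ac)
      also have "\<dots> = sW q (ls x (ls y w)) + sW q (ls x (rs z v)) + sW q (rs (succ y z) u)" by (simp only: i)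
      also have "\<dots> = sW q (ls x (ls y w) + ls x (rs z v) + rs (succ y z) u)" by (simp add: WW wadd)
      finally show ?thesis by (simp add: WW winv)
    qed
    show ?thesis
      unfolding P sd_prod_def pscale_def dast_def
      using s1 s2 s3 by (simp add: ax[unfolded dast_def])
  qed
  show ?thesis unfolding qdend_alg_def using sub bil[OF bs rls rrs] bil[OF bp rlp rrp] ax2 by blast
qed


lemma dend_assoc:
  assumes D: "qdend_alg q S s succ prec"
    and sadd: "\<And>c x y. x\<in>S \<Longrightarrow> y\<in>S \<Longrightarrow> s c (x+y) = s c x + s c y"
    and sinv: "\<And>x. x\<in>S \<Longrightarrow> s q (s (inverse q) x) = x"
  shows "qassoc_alg q S s (dast succ prec)"
proof -
  from D have sub: "subspace_on S s" and bs: "bilinear_on S s succ" and bp: "bilinear_on S s prec"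
    and ax: "\<forall>x\<in>S. \<forall>y\<in>S. \<forall>z\<in>S.
        prec (prec x y) z = s q (prec x (dast succ prec y z)) \<and>
        prec (succ x y) z = s q (succ x (prec y z)) \<and>
        succ x (succ y z) = s (inverse q) (succ (dast succ prec x y) z)"
    unfolding qdend_alg_def by auto
  from sub have add: "\<And>x y. x\<in>S \<Longrightarrow> y\<in>S \<Longrightarrow> x+y\<in>S" and sc: "\<And>c x. x\<in>S \<Longrightarrow> s c x\<in>S"
    unfolding subspace_on_def by auto
  from bs have sS: "\<And>x y. x\<in>S \<Longrightarrow> y\<in>S \<Longrightarrow> succ x y \<in> S"
    and sl: "\<And>x y z. x\<in>S \<Longrightarrow> y\<in>S \<Longrightarrow> z\<in>S \<Longrightarrow> succ (x + y) z = succ x z + succ y z"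
    and sr: "\<And>x y z. x\<in>S \<Longrightarrow> y\<in>S \<Longrightarrow> z\<in>S \<Longrightarrow> succ z (x + y) = succ z x + succ z y"
    and ss1: "\<And>c x y. x\<in>S \<Longrightarrow> y\<in>S \<Longrightarrow> succ (s c x) y = s c (succ x y)"
    and ss2: "\<And>c x y. x\<in>S \<Longrightarrow> y\<in>S \<Longrightarrow> succ x (s c y) = s c (succ x y)"
    unfolding bilinear_on_def by auto
  from bp have pS: "\<And>x y. x\<in>S \<Longrightarrow> y\<in>S \<Longrightarrow> prec x y \<in> S"
    and pl: "\<And>x y z. x\<in>S \<Longrightarrow> y\<in>S \<Longrightarrow> z\<in>S \<Longrightarrow> prec (x + y) z = prec x z + prec y z"
    and pr: "\<And>x y z. x\<in>S \<Longrightarrow> y\<in>S \<Longrightarrow> z\<in>S \<Longrightarrow> prec z (x + y) = prec z x + prec z y"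
    and ps1: "\<And>c x y. x\<in>S \<Longrightarrow> y\<in>S \<Longrightarrow> prec (s c x) y = s c (prec x y)"
    and ps2: "\<And>c x y. x\<in>S \<Longrightarrow> y\<in>S \<Longrightarrow> prec x (s c y) = s c (prec x y)"
    unfolding bilinear_on_def by auto
  have "bilinear_on S s (dast succ prec)"
    unfolding bilinear_on_def dast_def
    by (auto simp: add sS pS sl sr pl pr ss1 ss2 ps1 ps2 sadd algebra_simps)
  moreover have "dast succ prec (dast succ prec x y) z = s q (dast succ prec x (dast succ prec y z))"
    if "x\<in>S" "y\<in>S" "z\<in>S" for x y z
  proof -
    have e1: "prec (prec x y) z = s q (prec x (dast succ prec y z))"
      and e2: "prec (succ x y) z = s q (succ x (prec y z))"
      and e3: "succ x (succ y z) = s (inverse q) (succ (dast succ prec x y) z)"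
      using ax that by auto
    have e3': "succ (dast succ prec x y) z = s q (succ x (succ y z))"
      using e3 sinv[of "succ (dast succ prec x y) z"] that
      by (simp add: dast_def add sS pS)
    have "dast succ prec (dast succ prec x y) z
       = prec (prec x y) z + prec (succ x y) z + succ (dast succ prec x y) z"
      using that by (simp add: dast_def add sS pS pl sl algebra_simps)
    also have "\<dots> = s q (prec x (dast succ prec y z)) + s q (succ x (prec y z)) + s q (succ x (succ y z))"
      using e1 e2 e3' by simp
    also have "\<dots> = s q (dast succ prec x (dast succ prec y z))"
      using that by (simp add: dast_def add sS pS sr sadd algebra_simps)
    finally show ?thesis .
  qed
  ultimately show ?thesis using sub unfolding qassoc_alg_def by auto
qed


lemma dual_sub: "subspace_on (dual_space sV) (dscale :: 'k::field \<Rightarrow> _)"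
  unfolding subspace_on_def dual_space_def dscale_def by (auto simp: algebra_simps)

lemma dual_rep2:
  assumes vs: "vector_space sV" and f: "rep_map UNIV sA UNIV sV f" and g: "rep_map UNIV sA UNIV sV g"
  shows "rep_map UNIV sA (dual_space sV) dscale (\<lambda>x a. dscale (c::'k::field) (dual_rep f x a + dual_rep g x a))"
  using repD[OF f] repD[OF g]
  unfolding rep_map_def lin_endo_def dual_space_def dscale_def dual_rep_def
  by (auto simp: algebra_simps fun_eq_iff)

lemma dual_rep1:
  assumes vs: "vector_space sV" and f: "rep_map UNIV sA UNIV sV f"
  shows "rep_map UNIV sA (dual_space sV) dscale (\<lambda>x a. dscale (c::'k::field) (dual_rep f x a))"
  using repD[OF f]
  unfolding rep_map_def lin_endo_def dual_space_def dscale_def dual_rep_def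
  by (auto simp: algebra_simps fun_eq_iff)

lemma dual_rep0:
  shows "rep_map UNIV sA (dual_space sV) (dscale :: 'k::field \<Rightarrow> _) (\<lambda>x a. 0)"
  unfolding rep_map_def lin_endo_def dual_space_def dscale_def
  by (auto simp: fun_eq_iff)

theorem mainTheorem7:
  fixes q :: "'k::field"
    and sA :: "'k \<Rightarrow> 'a::ab_group_add \<Rightarrow> 'a"
    and sV :: "'k \<Rightarrow> 'v::ab_group_add \<Rightarrow> 'v"
    and succ prec :: "'a \<Rightarrow> 'a \<Rightarrow> 'a"
    and ls rs lp rp :: "'a \<Rightarrow> 'v \<Rightarrow> 'v"
  defines "Vd \<equiv> dual_space sV"
    and "lsd \<equiv> dual_rep ls" and "rsd \<equiv> dual_rep rs"
    and "lpd \<equiv> dual_rep lp" and "rpd \<equiv> dual_rep rp"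
  assumes q0: "q \<noteq> 0"
    and vsA: "is_vspace sA" and vsV: "is_vspace sV"
    and dend: "qdend_alg q UNIV sA succ prec"
    and bimod: "qdend_bimod q UNIV sA succ prec UNIV sV ls rs lp rp"
  shows
    \<comment> \<open>(1)\<close>
    "qdend_bimod q UNIV sA succ prec Vd dscale
        (\<lambda>x a. dscale (inverse (q^2)) (rsd x a + rpd x a))
        (\<lambda>x a. dscale (- (q^2)) (lpd x a))
        (\<lambda>x a. dscale (- inverse (q^2)) (rsd x a))
        (\<lambda>x a. dscale (q^2) (lsd x a + lpd x a))
     \<comment> \<open>(2)\<close>
   \<and> qdend_bimod q UNIV sA succ prec Vd dscale
        (\<lambda>x a. dscale (inverse (q^2)) (rsd x a + rpd x a))
        (\<lambda>x a. 0) (\<lambda>x a. 0)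
        (\<lambda>x a. dscale (q^2) (lsd x a + lpd x a))
   \<and> qdend_bimod q UNIV sA succ prec Vd dscale
        (\<lambda>x a. dscale (inverse (q^2)) (rpd x a))
        (\<lambda>x a. 0) (\<lambda>x a. 0)
        (\<lambda>x a. dscale (q^2) (lsd x a))
     \<comment> \<open>(3)\<close>
   \<and> qassoc_bimod q UNIV sA (dast succ prec) Vd dscale
        (\<lambda>x a. dscale (inverse (q^2)) (rsd x a + rpd x a))
        (\<lambda>x a. dscale (q^2) (lsd x a + lpd x a))
   \<and> qassoc_bimod q UNIV sA (dast succ prec) Vd dscale
        (\<lambda>x a. dscale (inverse (q^2)) (rpd x a))
        (\<lambda>x a. dscale (q^2) (lsd x a))
     \<comment> \<open>(4)\<close>
   \<and> (let S = UNIV \<times> Vd; sP = pscale sA dscale;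
          succ1 = sd_prod succ (\<lambda>x a. dscale (inverse (q^2)) (rsd x a + rpd x a))
                               (\<lambda>x a. dscale (- (q^2)) (lpd x a));
          prec1 = sd_prod prec (\<lambda>x a. dscale (- inverse (q^2)) (rsd x a))
                               (\<lambda>x a. dscale (q^2) (lsd x a + lpd x a));
          succ2 = sd_prod succ (\<lambda>x a. dscale (inverse (q^2)) (rpd x a)) (\<lambda>x a. 0);
          prec2 = sd_prod prec (\<lambda>x a. 0) (\<lambda>x a. dscale (q^2) (lsd x a));
          ast0 = sd_prod (dast succ prec) (\<lambda>x a. dscale (inverse (q^2)) (rpd x a))
                               (\<lambda>x a. dscale (q^2) (lsd x a))
      in qdend_alg q S sP succ1 prec1 \<and> qdend_alg q S sP succ2 prec2
         \<and> qassoc_alg q S sP ast0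
         \<and> (\<forall>p\<in>S. \<forall>p'\<in>S. dast succ1 prec1 p p' = ast0 p p' \<and> dast succ2 prec2 p p' = ast0 p p'))"
proof -
  have vA: "vector_space sA" and vV: "vector_space sV" using vsA vsV unfolding is_vspace_def by auto
  from bimod have rls: "rep_map UNIV sA UNIV sV ls" and rrs: "rep_map UNIV sA UNIV sV rs"
    and rlp: "rep_map UNIV sA UNIV sV lp" and rrp: "rep_map UNIV sA UNIV sV rp"
    and ids: "\<And>x y w.
        lp (prec x y) w = sV q (lp x (ls y w + lp y w)) \<and>
        rp x (lp y w) = sV q (lp y (rs x w + rp x w)) \<and>
        rp x (rp y w) = sV q (rp (dast succ prec y x) w) \<and>
        lp (succ x y) w = sV q (ls x (lp y w)) \<and>
        rp x (ls y w) = sV q (ls y (rp x w)) \<and>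
        rp x (rs y w) = sV q (rs (prec y x) w) \<and>
        ls (dast succ prec x y) w = sV q (ls x (ls y w)) \<and>
        rs x (ls y w + lp y w) = sV q (ls y (rs x w)) \<and>
        rs x (rs y w + rp y w) = sV q (rs (succ y x) w)"
    unfolding qdend_bimod_def Let_def by auto
  note lin = repD[OF rls, simplified] repD[OF rrs, simplified] repD[OF rlp, simplified] repD[OF rrp, simplified]
  have sVinv: "\<And>z. sV (inverse q) (sV q z) = z"
    using q0 vector_space.vector_space_assms(3,4)[OF vV] by simp
  have B1: "\<And>x y w. lp (prec x y) w = sV q (lp x (ls y w + lp y w))"
    and B2: "\<And>x y w. rp x (lp y w) = sV q (lp y (rs x w + rp x w))"
    and B4: "\<And>x y w. lp (succ x y) w = sV q (ls x (lp y w))"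
    and B5: "\<And>x y w. rp x (ls y w) = sV q (ls y (rp x w))"
    and B7: "\<And>x y w. ls (dast succ prec x y) w = sV q (ls x (ls y w))"
    using ids by blast+
  have rs_prec: "\<And>x y w. rs (prec y x) w = sV (inverse q) (rp x (rs y w))"
    using ids sVinv by metis
  have rs_succ: "\<And>x y w. rs (succ y x) w = sV (inverse q) (rs x (rs y w + rp y w))"
    using ids sVinv by metis
  have rp_dast: "\<And>x y w. rp (dast succ prec y x) w = sV (inverse q) (rp x (rp y w))"
    using ids sVinv by metis
  have B8: "\<And>x y w. ls y (rs x w) = sV (inverse q) (rs x (ls y w + lp y w))"
    using ids sVinv by metis
  have rs_dast: "\<And>x y w. rs (dast succ prec y x) w = sV (inverse q) (rp x (rs y w)) + sV (inverse q) (rs x (rs y w + rp y w))"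
    using rs_prec rs_succ lin by (simp add: dast_def)
  have lp_dast: "\<And>x y w. lp (dast succ prec x y) w = sV q (lp x (ls y w + lp y w)) + sV q (ls x (lp y w))"
    using B1 B4 lin by (simp add: dast_def)
  note Vr = B1 B2 B4 B5 B7 B8 rs_prec rs_succ rp_dast rs_dast lp_dast
  have Vd: "\<And>a. a \<in> Vd \<longleftrightarrow> (\<forall>u v. a (u + v) = a u + a v) \<and> (\<forall>c u. a (sV c u) = c * a u)"
    unfolding Vd_def dual_space_def by auto
  have q4: "q ^ 4 = q * (q * (q * q))" by (simp add: numeral_eq_Suc)
  have subV: "subspace_on Vd dscale" unfolding Vd_def by (rule dual_sub)
  note R2 = dual_rep2[OF vV, folded Vd_def] and R1 = dual_rep1[OF vV, folded Vd_def]
    and R0 = dual_rep0[of sA sV, folded Vd_def]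
  have P1: "qdend_bimod q UNIV sA succ prec Vd dscale
        (\<lambda>x a. dscale (inverse (q^2)) (rsd x a + rpd x a))
        (\<lambda>x a. dscale (- (q^2)) (lpd x a))
        (\<lambda>x a. dscale (- inverse (q^2)) (rsd x a))
        (\<lambda>x a. dscale (q^2) (lsd x a + lpd x a))"
    unfolding qdend_bimod_def Let_def
    apply (intro conjI subV)
    apply (unfold lsd_def rsd_def lpd_def rpd_def)
    apply (rule R2 R1 R0; fact)+
    apply (intro ballI conjI)
    apply (auto intro!: ext simp: Vd dscale_def dual_rep_def Vr lin)
    apply (simp_all add: field_simps q0 power2_eq_square q4)
    done
  have P2a: "qdend_bimod q UNIV sA succ prec Vd dscale
        (\<lambda>x a. dscale (inverse (q^2)) (rsd x a + rpd x a))
        (\<lambda>x a. 0) (\<lambda>x a. 0)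
        (\<lambda>x a. dscale (q^2) (lsd x a + lpd x a))"
    unfolding qdend_bimod_def Let_def
    apply (intro conjI subV)
    apply (unfold lsd_def rsd_def lpd_def rpd_def)
    apply (rule R2 R1 R0; fact)+
    apply (intro ballI conjI)
    apply (auto intro!: ext simp: Vd dscale_def dual_rep_def Vr lin)
    apply (simp_all add: field_simps q0 power2_eq_square q4)
    done
  have P2b: "qdend_bimod q UNIV sA succ prec Vd dscale
        (\<lambda>x a. dscale (inverse (q^2)) (rpd x a))
        (\<lambda>x a. 0) (\<lambda>x a. 0)
        (\<lambda>x a. dscale (q^2) (lsd x a))"
    unfolding qdend_bimod_def Let_def
    apply (intro conjI subV)
    apply (unfold lsd_def rsd_def lpd_def rpd_def)
    apply (rule R2 R1 R0; fact)+
    apply (intro ballI conjI)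
    apply (auto intro!: ext simp: Vd dscale_def dual_rep_def Vr lin)
    apply (simp_all add: field_simps q0 power2_eq_square q4)
    done
  have P3a: "qassoc_bimod q UNIV sA (dast succ prec) Vd dscale
        (\<lambda>x a. dscale (inverse (q^2)) (rsd x a + rpd x a))
        (\<lambda>x a. dscale (q^2) (lsd x a + lpd x a))"
    unfolding qassoc_bimod_def
    apply (intro conjI subV)
    apply (unfold lsd_def rsd_def lpd_def rpd_def)
    apply (rule R2 R1 R0; fact)+
    apply (intro ballI conjI)
    apply (auto intro!: ext simp: Vd dscale_def dual_rep_def Vr lin)
    apply (simp_all add: field_simps q0 power2_eq_square q4)
    done
  have P3b: "qassoc_bimod q UNIV sA (dast succ prec) Vd dscale
        (\<lambda>x a. dscale (inverse (q^2)) (rpd x a))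
        (\<lambda>x a. dscale (q^2) (lsd x a))"
    unfolding qassoc_bimod_def
    apply (intro conjI subV)
    apply (unfold lsd_def rsd_def lpd_def rpd_def)
    apply (rule R2 R1 R0; fact)+
    apply (intro ballI conjI)
    apply (auto intro!: ext simp: Vd dscale_def dual_rep_def Vr lin)
    apply (simp_all add: field_simps q0 power2_eq_square q4)
    done
  have wadd: "\<And>c u v. u\<in>Vd \<Longrightarrow> v\<in>Vd \<Longrightarrow> dscale c (u+v) = dscale c u + dscale c (v::'v \<Rightarrow> 'k)"
    by (simp add: dscale_def fun_eq_iff algebra_simps)
  have winv: "\<And>u. u\<in>Vd \<Longrightarrow> dscale (inverse q) (dscale q u) = (u::'v \<Rightarrow> 'k)"
    using q0 by (simp add: dscale_def fun_eq_iff)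
  have sadd: "\<And>c p p'. p\<in>UNIV \<times> Vd \<Longrightarrow> p'\<in>UNIV \<times> Vd \<Longrightarrow>
      pscale sA dscale c (p+p') = pscale sA dscale c p + pscale sA dscale c p'"
    using vector_space.vector_space_assms(1)[OF vA]
    by (auto simp: pscale_def dscale_def fun_eq_iff algebra_simps)
  have sinv: "\<And>p. p\<in>UNIV \<times> Vd \<Longrightarrow> pscale sA dscale q (pscale sA dscale (inverse q) p) = p"
    using q0 vector_space.vector_space_assms(3,4)[OF vA]
    by (auto simp: pscale_def dscale_def fun_eq_iff)
  note D1 = sd_dend[OF dend P1 wadd winv] and D2 = sd_dend[OF dend P2b wadd winv]
  have E1: "dast (sd_prod succ (\<lambda>x a. dscale (inverse (q^2)) (rsd x a + rpd x a))
                               (\<lambda>x a. dscale (- (q^2)) (lpd x a)))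
                 (sd_prod prec (\<lambda>x a. dscale (- inverse (q^2)) (rsd x a))
                               (\<lambda>x a. dscale (q^2) (lsd x a + lpd x a)))
       = sd_prod (dast succ prec) (\<lambda>x a. dscale (inverse (q^2)) (rpd x a))
                               (\<lambda>x a. dscale (q^2) (lsd x a))"
    by (auto simp: dast_def sd_prod_def dscale_def fun_eq_iff algebra_simps)
  have E2: "dast (sd_prod succ (\<lambda>x a. dscale (inverse (q^2)) (rpd x a)) (\<lambda>x a. 0))
                 (sd_prod prec (\<lambda>x a. 0) (\<lambda>x a. dscale (q^2) (lsd x a)))
       = sd_prod (dast succ prec) (\<lambda>x a. dscale (inverse (q^2)) (rpd x a))
                               (\<lambda>x a. dscale (q^2) (lsd x a))"
    by (auto simp: dast_def sd_prod_def dscale_def fun_eq_iff algebra_simps)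
  have A0: "qassoc_alg q (UNIV \<times> Vd) (pscale sA dscale)
       (sd_prod (dast succ prec) (\<lambda>x a. dscale (inverse (q^2)) (rpd x a))
                               (\<lambda>x a. dscale (q^2) (lsd x a)))"
    using dend_assoc[OF D2 sadd sinv] unfolding E2 .
  show ?thesis
    unfolding Let_def using P1 P2a P2b P3a P3b D1 D2 A0 E1 E2 by simp
qed

end
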